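(* In the quantum groupoid $H_\mathcal{C}$, for all basis elements, $$\Delta(e^{ab}_{i;cd})=\sum_{j,k,p,q}\frac{\sqrt{d_id_jd_k}}{\sqrt{d_ad_bd_cd_d}}\;G^{ikj}_{pab}\;G^{ijk}_{qdc}\;e^{ap}_{j;cq}\otimes e^{pb}_{k;qd},$$ where $j,k$ range over simple objects such that $(i,j,k)$ is admissible.
   Context: $\mathcal{C}$ is a unitary fusion category which is multiplicity free and whose simple objects are self-dual with trivial Frobenius–Schur indicators; $d_a$ is the quantum dimension, $(a,b,c)$ admissible means $\mathrm{Hom}(a\otimes b,c)\ne0$. Trivalent vertices are normalized so that $\theta(a,b,c)=\sqrt{d_ad_bd_c}$. $F$-symbols $F^{abc}_{d;nm}$: the basis vector of $\mathrm{Hom}((a\otimes b)\otimes c,d)$ with intermediate $m$ equals $\sum_nF^{abc}_{d;nm}$ times that of $\mathrm{Hom}(a\otimes(b\otimes c),d)$ with intermediate $n$; they are unitary. Symmetric $6j$-symbols: $G^{abc}_{kmn}:=\frac{\sqrt{d_md_k}}{\sqrt{d_c}}F^{amk}_{b;cn}$ (the factor collapsing a triangular bubble with outer legs $a$ (top), $b$, $c$ and inner edges $m$ (between $a,c$), $n$ (between $a,b$), $k$ (between $b,c$) to a single vertex). $H_\mathcal{C}$ has basis $e^{ab}_{i;cd}$, with $(a,i,b)$ and $(i,d,c)$ admissible, spanning $\bigoplus\mathrm{Hom}(b,a\otimes i)\otimes\mathrm{Hom}(i\otimes d,c)$, drawn as an "H" diagram: a left vertical strand labeled $a$ at top and $b$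 at bottom, a right vertical strand labeled $c$ at top and $d$ at bottom, joined by a horizontal rung labeled $i$. Its comultiplication is defined by $\Delta(e^{ab}_{i;cd})=\sum_{j,k,p,q}\langle\hat e^{ab}_{i;cd},X^{ab;cd}_{j,k;p,q}\rangle\,e^{ap}_{j;cq}\otimes e^{pb}_{k;qd}$, where $X^{ab;cd}_{j,k;p,q}$ is the two-rung ladder diagram (left strand labeled $a,p,b$ from top to bottom, right strand $c,q,d$, upper rung $j$, lower rung $k$), and $\langle\hat e^{ab}_{i;cd},X\rangle$ denotes the coefficient of $e^{ab}_{i;cd}$ when $X$ is rewritten, via $F$-moves and bubble removal in $\mathcal{C}$, as a linear combination of the single-rung diagrams $e^{ab}_{i;cd}$. (The other structure maps: $e^{ab}_{i;cd}e^{a'b'}_{i';c'd'}=\frac{\delta_{c,a'}\delta_{d,b'}\delta_{i,i'}}{\sqrt{d_i}}e^{ab}_{i;c'd'}$, counit $\varepsilon(e^{ab}_{i;cd})=\delta_{ab}\delta_{cd}\delta_{i\mathbf 1}$.) *)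

theory Defs
  imports Complex_Main
begin

text \<open>
  Skeletal data of a multiplicity-free unitary fusion category whose simple objects are
  self-dual with trivial Frobenius--Schur indicators, with trivalent vertices normalised so
  that theta(a,b,c) = sqrt(d_a d_b d_c) (rotation-invariant vertices).
  Simple objects are the elements of a finite type 'l; u is the unit object;
  N a b c means that (a,b,c) is admissible; qd a is the quantum dimension d_a;
  F a b c e n m is the F-symbol F^{abc}_{e;nm}: the basis vector of Hom((a b) c, e) with
  intermediate m equals the sum over n of F^{abc}_{e;nm} times the basis vector of
  Hom(a (b c), e) with intermediate n.
\<close>

definition G6j :: "('l \<Rightarrow> real) \<Rightarrow> ('l \<Rightarrow> 'l \<Rightarrow> 'l \<Rightarrow> 'l \<Rightarrow> 'l \<Rightarrow> 'l \<Rightarrow> complex)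
                   \<Rightarrow> 'l \<Rightarrow> 'l \<Rightarrow> 'l \<Rightarrow> 'l \<Rightarrow> 'l \<Rightarrow> 'l \<Rightarrow> complex" where
  "G6j qd F a b c k m n = complex_of_real (sqrt (qd m * qd k) / sqrt (qd c)) * F a m k b c n"

text \<open>Tetrahedral (evaluation of the tetrahedron) normalisation of the 6j-symbol; its full
  tetrahedral symmetry expresses rotation invariance of the normalised vertices.\<close>
definition Tet6j :: "('l \<Rightarrow> real) \<Rightarrow> ('l \<Rightarrow> 'l \<Rightarrow> 'l \<Rightarrow> 'l \<Rightarrow> 'l \<Rightarrow> 'l \<Rightarrow> complex)
                   \<Rightarrow> 'l \<Rightarrow> 'l \<Rightarrow> 'l \<Rightarrow> 'l \<Rightarrow> 'l \<Rightarrow> 'l \<Rightarrow> complex" where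
  "Tet6j qd F a b c k m n = complex_of_real (sqrt (qd a * qd b * qd c)) * G6j qd F a b c k m n"

definition sym_ufc ::
  "('l::finite \<Rightarrow> 'l \<Rightarrow> 'l \<Rightarrow> bool) \<Rightarrow> 'l \<Rightarrow> ('l \<Rightarrow> real)
   \<Rightarrow> ('l \<Rightarrow> 'l \<Rightarrow> 'l \<Rightarrow> 'l \<Rightarrow> 'l \<Rightarrow> 'l \<Rightarrow> complex) \<Rightarrow> bool" where
  "sym_ufc N u qd F \<longleftrightarrow>
     \<comment> \<open>fusion rules: self-duality makes admissibility totally symmetric; unit object\<close>
     (\<forall>a b c. N a b c = N b a c \<and> N a b c = N a c b) \<and>
     (\<forall>a b. N u a b \<longleftrightarrow> a = b) \<and>
     \<comment> \<open>quantum dimensions\<close>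
     (\<forall>a. qd a > 0) \<and> qd u = 1 \<and>
     (\<forall>a b. qd a * qd b = (\<Sum>c\<in>{c. N a b c}. qd c)) \<and>
     \<comment> \<open>F-symbols vanish off admissible labels\<close>
     (\<forall>a b c e n m. F a b c e n m \<noteq> 0 \<longrightarrow> N a b m \<and> N m c e \<and> N b c n \<and> N a n e) \<and>
     \<comment> \<open>unitarity\<close>
     (\<forall>a b c e m m'. N a b m \<and> N m c e \<and> N a b m' \<and> N m' c e \<longrightarrow>
        (\<Sum>n\<in>UNIV. cnj (F a b c e n m) * F a b c e n m') = (if m = m' then 1 else 0)) \<and>
     (\<forall>a b c e n n'. N b c n \<and> N a n e \<and> N b c n' \<and> N a n' e \<longrightarrow>
        (\<Sum>m\<in>UNIV. F a b c e n m * cnj (F a b c e n' m)) = (if n = n' then 1 else 0)) \<and>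
     \<comment> \<open>pentagon equation (in the above basis-change convention)\<close>
     (\<forall>a b c d e m l s t. F m c d e s l * F a b s e t m =
        (\<Sum>n\<in>UNIV. F a b c l n m * F a n d e t l * F b c d t s n)) \<and>
     \<comment> \<open>tetrahedral symmetry (rotation invariance of the normalised vertices)\<close>
     (\<forall>a b c k m n. Tet6j qd F a b c k m n = Tet6j qd F b a c m k n \<and>
                     Tet6j qd F a b c k m n = Tet6j qd F a c b k n m \<and>
                     Tet6j qd F a b c k m n = Tet6j qd F k m c a b n)"

text \<open>Basis index of H_C: HIdx a b i c d stands for e^{ab}_{i;cd}.\<close>
datatype 'l hidx = HIdx 'l 'l 'l 'l 'l

fun hbasis :: "('l \<Rightarrow> 'l \<Rightarrow> 'l \<Rightarrow> bool) \<Rightarrow> 'l hidx \<Rightarrow> bool" where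
  "hbasis N (HIdx a b i c d) \<longleftrightarrow> N a i b \<and> N i d c"

text \<open>
  Diagrams with bottom legs b, d and top legs a, c are morphisms in Hom(b d, a c).  We
  represent such a morphism by its coordinates in the basis v_x (fusion vertex b d -> x
  followed by splitting vertex x -> a c, both theta-normalised), x simple.
  By an F-move, the H-diagram e^{ab}_{i;cd} equals sum_x F^{abd}_{c;xi} v_x
  (bend the leg a down: H is the tree ((a b)_i d) -> c, v_x the tree (a (b d)_x) -> c).
\<close>
definition hdiag :: "('l \<Rightarrow> 'l \<Rightarrow> 'l \<Rightarrow> 'l \<Rightarrow> 'l \<Rightarrow> 'l \<Rightarrow> complex)
                     \<Rightarrow> 'l \<Rightarrow> 'l \<Rightarrow> 'l \<Rightarrow> 'l \<Rightarrow> 'l \<Rightarrow> ('l \<Rightarrow> complex)" where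
  "hdiag F a b i c d = (\<lambda>x. F a b d c x i)"

text \<open>Two-rung ladder X^{ab;cd}_{j,k;p,q}: the composite of e^{pb}_{k;qd} (bottom) and
  e^{ap}_{j;cq} (top).  Composing v_x (top) with v_y (bottom) gives delta_{xy} times the
  bubble on x with inner edges p, q, i.e. sqrt(d_p d_q / d_x) v_x.\<close>
definition ladder :: "('l \<Rightarrow> 'l \<Rightarrow> 'l \<Rightarrow> bool) \<Rightarrow> ('l \<Rightarrow> real)
                      \<Rightarrow> ('l \<Rightarrow> 'l \<Rightarrow> 'l \<Rightarrow> 'l \<Rightarrow> 'l \<Rightarrow> 'l \<Rightarrow> complex)
                      \<Rightarrow> 'l \<Rightarrow> 'l \<Rightarrow> 'l \<Rightarrow> 'l \<Rightarrow> 'l \<Rightarrow> 'l \<Rightarrow> 'l \<Rightarrow> 'l \<Rightarrow> ('l \<Rightarrow> complex)" where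
  "ladder N qd F a b c d j k p q =
     (\<lambda>x. if N p q x then
            hdiag F a p j c q x * hdiag F p b k q d x
              * complex_of_real (sqrt (qd p * qd q / qd x))
          else 0)"

text \<open>Coefficient of e^{ab}_{i;cd} when a morphism X in Hom(b d, a c) (given by v-coordinates)
  is expanded in the basis of single-rung diagrams e^{ab}_{i';cd} (the change of basis
  between the v_x and the e^{ab}_{i';cd} is the unitary F-matrix).\<close>
definition coeff_e :: "('l::finite \<Rightarrow> 'l \<Rightarrow> 'l \<Rightarrow> 'l \<Rightarrow> 'l \<Rightarrow> 'l \<Rightarrow> complex)
                      \<Rightarrow> 'l \<Rightarrow> 'l \<Rightarrow> 'l \<Rightarrow> 'l \<Rightarrow> 'l \<Rightarrow> ('l \<Rightarrow> complex) \<Rightarrow> complex" where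
  "coeff_e F a b i c d X = (\<Sum>x\<in>UNIV. cnj (hdiag F a b i c d x) * X x)"

text \<open>Comultiplication of H_C on a basis element, as the function giving the coefficient of
  each basis tensor e1 \<otimes> e2 of H_C \<otimes> H_C:
  Delta(e^{ab}_{i;cd}) = sum_{j,k,p,q} <e^{ab}_{i;cd}^, X^{ab;cd}_{j,k;p,q}> e^{ap}_{j;cq} \<otimes> e^{pb}_{k;qd}.\<close>
fun comult :: "('l::finite \<Rightarrow> 'l \<Rightarrow> 'l \<Rightarrow> bool) \<Rightarrow> ('l \<Rightarrow> real)
               \<Rightarrow> ('l \<Rightarrow> 'l \<Rightarrow> 'l \<Rightarrow> 'l \<Rightarrow> 'l \<Rightarrow> 'l \<Rightarrow> complex)
               \<Rightarrow> 'l hidx \<Rightarrow> 'l hidx \<times> 'l hidx \<Rightarrow> complex" where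
  "comult N qd F (HIdx a b i c d) (HIdx a' p j c' q, HIdx p' b' k q' d') =
     (if a' = a \<and> c' = c \<and> p' = p \<and> q' = q \<and> b' = b \<and> d' = d
         \<and> hbasis N (HIdx a p j c q) \<and> hbasis N (HIdx p b k q d)
      then coeff_e F a b i c d (ladder N qd F a b c d j k p q)
      else 0)"

end

theory Submission
  imports Defs
begin

lemma Nsym1: "sym_ufc N u qd F \<Longrightarrow> N a b c = N b a c" unfolding sym_ufc_def by (elim conjE; metis)
lemma Nsym2: "sym_ufc N u qd F \<Longrightarrow> N a b c = N a c b" unfolding sym_ufc_def by (elim conjE; metis)
lemma qpos: "sym_ufc N u qd F \<Longrightarrow> qd a > 0" unfolding sym_ufc_def by (elim conjE; metis)
lemma Fvan: "sym_ufc N u qd F \<Longrightarrow> F a b c e n m \<noteq> 0 \<Longrightarrow> N a b m \<and> N m c e \<and> N b c n \<and> N a n e"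
  unfolding sym_ufc_def by (elim conjE; metis)
lemma unit2: "sym_ufc N u qd F \<Longrightarrow> N b c n \<and> N a n e \<and> N b c n' \<and> N a n' e \<Longrightarrow>
        (\<Sum>m\<in>UNIV. F a b c e n m * cnj (F a b c e n' m)) = (if n = n' then 1 else 0)"
  unfolding sym_ufc_def by (elim conjE; metis)
lemma pent: "sym_ufc N u qd F \<Longrightarrow> F m c d e s l * F a b s e t m =
        (\<Sum>n\<in>UNIV. F a b c l n m * F a n d e t l * F b c d t s n)"
  unfolding sym_ufc_def by (elim conjE; metis)
lemma tet: "sym_ufc N u qd F \<Longrightarrow> Tet6j qd F a b c k m n = Tet6j qd F b a c m k n"
             "sym_ufc N u qd F \<Longrightarrow> Tet6j qd F a b c k m n = Tet6j qd F a c b k n m"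
             "sym_ufc N u qd F \<Longrightarrow> Tet6j qd F a b c k m n = Tet6j qd F k m c a b n"
  unfolding sym_ufc_def by (elim conjE; metis)+

definition sq :: "('l \<Rightarrow> real) \<Rightarrow> 'l \<Rightarrow> complex" where
  "sq qd x = complex_of_real (sqrt (qd x))"

lemma sq_nz: "qd x > 0 \<Longrightarrow> sq qd x \<noteq> 0"
  unfolding sq_def by simp

lemma Tet_F:
  assumes "\<And>x. qd x > 0"
  shows "Tet6j qd F a b c k m n = sq qd a * sq qd b * sq qd k * sq qd m * F a m k b c n"
proof -
  have c: "sqrt (qd c) \<noteq> 0" using assms[of c] by simp
  have "sqrt (qd a * qd b * qd c) * (sqrt (qd m * qd k) / sqrt (qd c))
        = sqrt (qd a) * sqrt (qd b) * sqrt (qd k) * sqrt (qd m)"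
    using c by (simp add: real_sqrt_mult field_simps)
  then have "complex_of_real (sqrt (qd a * qd b * qd c)) * complex_of_real (sqrt (qd m * qd k) / sqrt (qd c))
        = sq qd a * sq qd b * sq qd k * sq qd m"
    unfolding sq_def by (metis of_real_mult)
  then show ?thesis unfolding Tet6j_def G6j_def by (metis mult.assoc)
qed

lemma D1:
  assumes U: "sym_ufc N u qd F" and h: "N b c n'" "N a n' l"
  shows "(\<Sum>m\<in>UNIV. cnj (F a b c l n' m) * (F m c d e s l * F a b s e t m))
        = F a n' d e t l * F b c d t s n'"
proof -
  have "(\<Sum>m\<in>UNIV. cnj (F a b c l n' m) * (F m c d e s l * F a b s e t m))
     = (\<Sum>m\<in>UNIV. \<Sum>n\<in>UNIV. cnj (F a b c l n' m) * (F a b c l n m * (F a n d e t l * F b c d t s n)))"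
    by (simp add: pent[OF U] sum_distrib_left mult.assoc)
  also have "\<dots> = (\<Sum>n\<in>UNIV. (F a n d e t l * F b c d t s n) *
                    (\<Sum>m\<in>UNIV. F a b c l n m * cnj (F a b c l n' m)))"
    by (subst sum.swap) (simp add: sum_distrib_left mult.commute mult.left_commute)
  also have "\<dots> = (\<Sum>n\<in>UNIV. if n = n' then F a n d e t l * F b c d t s n else 0)"
  proof (rule sum.cong[OF refl])
    fix n
    show "(F a n d e t l * F b c d t s n) * (\<Sum>m\<in>UNIV. F a b c l n m * cnj (F a b c l n' m))
        = (if n = n' then F a n d e t l * F b c d t s n else 0)"
    proof (cases "F a n d e t l * F b c d t s n = 0")
      case True then show ?thesis by auto
    next
      case False
      then have "F a n d e t l \<noteq> 0" "F b c d t s n \<noteq> 0" by auto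
      then have "N a n l" "N b c n" using Fvan[OF U] by blast+
      then show ?thesis using unit2[OF U, of b c n a l n'] h by simp
    qed
  qed
  also have "\<dots> = F a n' d e t l * F b c d t s n'" by simp
  finally show ?thesis .
qed


lemma sq_nzU: "sym_ufc N u qd F \<Longrightarrow> sq qd x \<noteq> 0"
  by (rule sq_nz, rule qpos)

lemma sq_of_real_sqrt: "complex_of_real (sqrt (qd x)) = sq qd x" by (simp add: sq_def)

lemma E1:
  assumes U: "sym_ufc N u qd F"
  shows "F a b d c x i = F d b a c i x"
proof -
  have pos: "\<And>y. qd y > 0" using qpos[OF U] .
  have "Tet6j qd F a c x d b i = Tet6j qd F a x c d i b" by (rule tet(2)[OF U])
  also have "\<dots> = Tet6j qd F d i c a x b" by (rule tet(3)[OF U])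
  also have "\<dots> = Tet6j qd F d c i a b x" by (rule tet(2)[OF U])
  finally have "sq qd a * sq qd c * sq qd d * sq qd b * F a b d c x i
       = sq qd d * sq qd c * sq qd a * sq qd b * F d b a c i x"
    unfolding Tet_F[OF pos] .
  then show ?thesis using sq_nzU[OF U] by (simp add: mult_ac)
qed

lemma E2:
  assumes U: "sym_ufc N u qd F"
  shows "F a p q c x j * (sq qd p * sq qd c) = F x a j q p c * (sq qd x * sq qd j)"
proof -
  have pos: "\<And>y. qd y > 0" using qpos[OF U] .
  have "Tet6j qd F a c x q p j = Tet6j qd F q p x a c j" by (rule tet(3)[OF U])
  also have "\<dots> = Tet6j qd F q x p a j c" by (rule tet(2)[OF U])
  also have "\<dots> = Tet6j qd F x q p j a c" by (rule tet(1)[OF U])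
  finally have "sq qd a * sq qd c * sq qd q * sq qd p * F a p q c x j
       = sq qd x * sq qd q * sq qd j * sq qd a * F x a j q p c"
    unfolding Tet_F[OF pos] .
  then show ?thesis using sq_nzU[OF U] by (simp add: mult_ac)
qed

lemma E3:
  assumes U: "sym_ufc N u qd F"
  shows "F p b d q x k = F d b p q k x"
proof -
  have pos: "\<And>y. qd y > 0" using qpos[OF U] .
  have "Tet6j qd F p q x d b k = Tet6j qd F p x q d k b" by (rule tet(2)[OF U])
  also have "\<dots> = Tet6j qd F d k q p x b" by (rule tet(3)[OF U])
  also have "\<dots> = Tet6j qd F d q k p b x" by (rule tet(2)[OF U])
  finally have "sq qd p * sq qd q * sq qd d * sq qd b * F p b d q x k
       = sq qd d * sq qd q * sq qd p * sq qd b * F d b p q k x"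
    unfolding Tet_F[OF pos] .
  then show ?thesis using sq_nzU[OF U] by (simp add: mult_ac)
qed

lemma E4:
  assumes U: "sym_ufc N u qd F"
  shows "F i d q j k c = F d i j q k c"
proof -
  have pos: "\<And>y. qd y > 0" using qpos[OF U] .
  have "Tet6j qd F i j k q d c = Tet6j qd F j i k d q c" by (rule tet(1)[OF U])
  also have "\<dots> = Tet6j qd F d q k j i c" by (rule tet(3)[OF U])
  finally have "sq qd i * sq qd j * sq qd q * sq qd d * F i d q j k c
       = sq qd d * sq qd q * sq qd j * sq qd i * F d i j q k c"
    unfolding Tet_F[OF pos] .
  then show ?thesis using sq_nzU[OF U] by (simp add: mult_ac)
qed

lemma E5:
  assumes U: "sym_ufc N u qd F"
  shows "F b a j k p i * (sq qd b * sq qd j) = F i a p k j b * (sq qd i * sq qd p)"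
proof -
  have pos: "\<And>y. qd y > 0" using qpos[OF U] .
  have "Tet6j qd F b k p j a i = Tet6j qd F b p k j i a" by (rule tet(2)[OF U])
  also have "\<dots> = Tet6j qd F p b k i j a" by (rule tet(1)[OF U])
  also have "\<dots> = Tet6j qd F i j k p b a" by (rule tet(3)[OF U])
  also have "\<dots> = Tet6j qd F i k j p a b" by (rule tet(2)[OF U])
  finally have "sq qd b * sq qd k * sq qd j * sq qd a * F b a j k p i
       = sq qd i * sq qd k * sq qd p * sq qd a * F i a p k j b"
    unfolding Tet_F[OF pos] .
  then show ?thesis using sq_nzU[OF U] by (simp add: mult_ac)
qed


lemma main_sum:
  assumes U: "sym_ufc N u qd F" and h1: "N a i b" and h2: "N i d c"
  shows "coeff_e F a b i c d (ladder N qd F a b c d j k p q)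
       = (sq qd i * sq qd p * sq qd q / (sq qd b * sq qd c)) * (F i a p k j b * F i d q j k c)"
proof -
  let ?s = "sq qd"
  have nz: "\<And>y. ?s y \<noteq> 0" using sq_nzU[OF U] .
  have pos: "\<And>y. qd y > 0" using qpos[OF U] .
  have trm: "cnj (hdiag F a b i c d x) * ladder N qd F a b c d j k p q x
     = (?s j * ?s q / ?s c) * (cnj (F d b a c i x) * (F x a j q p c * F d b p q k x))" for x
  proof (cases "N p q x")
    case True
    have r: "complex_of_real (sqrt (qd p * qd q / qd x)) = ?s p * ?s q / ?s x"
      by (simp add: sq_def real_sqrt_mult real_sqrt_divide)
    have e2: "F a p q c x j = F x a j q p c * (?s x * ?s j) / (?s p * ?s c)"
      using E2[OF U, of a p q c x j] nz by (simp add: field_simps)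
    show ?thesis using True nz
      unfolding ladder_def hdiag_def
      by (simp add: r e2 E1[OF U, of a b d c x i] E3[OF U, of p b d q x k] field_simps)
  next
    case False
    have "F x a j q p c = 0"
    proof (rule ccontr)
      assume "F x a j q p c \<noteq> 0"
      then have "N x p q" using Fvan[OF U] by blast
      then show False using False Nsym1[OF U] Nsym2[OF U] by metis
    qed
    then show ?thesis using False unfolding ladder_def by simp
  qed
  have "coeff_e F a b i c d (ladder N qd F a b c d j k p q)
     = (?s j * ?s q / ?s c) * (\<Sum>x\<in>UNIV. cnj (F d b a c i x) * (F x a j q p c * F d b p q k x))"
    unfolding coeff_e_def trm by (simp add: sum_distrib_left)
  also have "\<dots> = (?s j * ?s q / ?s c) * (F d i j q k c * F b a j k p i)"
  proof -
    have "N b a i" using h1 Nsym1[OF U] Nsym2[OF U] by metis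
    moreover have "N d i c" using h2 Nsym1[OF U] by metis
    ultimately show ?thesis using D1[OF U, of b a i d c j q p k] by simp
  qed
  also have "\<dots> = (?s i * ?s p * ?s q / (?s b * ?s c)) * (F i a p k j b * F i d q j k c)"
  proof -
    have e5: "F b a j k p i = F i a p k j b * (?s i * ?s p) / (?s b * ?s j)"
      using E5[OF U, of b a j k p i] nz by (simp add: field_simps)
    show ?thesis using nz by (simp add: e5 E4[OF U, of i d q j k c] field_simps)
  qed
  finally show ?thesis .
qed

theorem mainTheorem7:
  fixes N :: "'l::finite \<Rightarrow> 'l \<Rightarrow> 'l \<Rightarrow> bool" and u :: 'l and qd :: "'l \<Rightarrow> real"
    and F :: "'l \<Rightarrow> 'l \<Rightarrow> 'l \<Rightarrow> 'l \<Rightarrow> 'l \<Rightarrow> 'l \<Rightarrow> complex"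
    and a b i c d :: 'l
  assumes "sym_ufc N u qd F"
    and "hbasis N (HIdx a b i c d)"
  shows "comult N qd F (HIdx a b i c d) =
    (\<lambda>e. case e of (HIdx a' p j c' q, HIdx p' b' k q' d') \<Rightarrow>
       (if a' = a \<and> c' = c \<and> p' = p \<and> q' = q \<and> b' = b \<and> d' = d
           \<and> hbasis N (HIdx a p j c q) \<and> hbasis N (HIdx p b k q d) \<and> N i j k
        then complex_of_real (sqrt (qd i * qd j * qd k) / sqrt (qd a * qd b * qd c * qd d))
               * G6j qd F i k j p a b * G6j qd F i j k q d c
        else 0))"
proof (rule ext)
  fix e :: "'l hidx \<times> 'l hidx"
  have U: "sym_ufc N u qd F" by (rule assms(1))
  have h1: "N a i b" and h2: "N i d c" using assms(2) by auto
  let ?s = "sq qd"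
  have nz: "\<And>y. ?s y \<noteq> 0" using sq_nzU[OF U] .
  obtain x y where e: "e = (x, y)" by fastforce
  obtain a' p j c' q where x: "x = HIdx a' p j c' q" by (cases x) auto
  obtain p' b' k q' d' where y: "y = HIdx p' b' k q' d'" by (cases y) auto
  have key: "(?s i * ?s p * ?s q / (?s b * ?s c)) * (F i a p k j b * F i d q j k c)
      = (if N i j k then complex_of_real (sqrt (qd i * qd j * qd k) / sqrt (qd a * qd b * qd c * qd d))
               * G6j qd F i k j p a b * G6j qd F i j k q d c else 0)"
  proof (cases "N i j k")
    case True
    have "complex_of_real (sqrt (qd i * qd j * qd k) / sqrt (qd a * qd b * qd c * qd d))
               * G6j qd F i k j p a b * G6j qd F i j k q d c
        = (?s i * ?s j * ?s k / (?s a * ?s b * ?s c * ?s d)) * (?s a * ?s p / ?s j * F i a p k j b)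
           * (?s d * ?s q / ?s k * F i d q j k c)"
      unfolding G6j_def by (simp add: sq_def real_sqrt_mult real_sqrt_divide)
    also have "\<dots> = (?s i * ?s p * ?s q / (?s b * ?s c)) * (F i a p k j b * F i d q j k c)"
      using nz by (simp add: field_simps)
    finally show ?thesis using True by simp
  next
    case False
    have "F i d q j k c = 0"
    proof (rule ccontr)
      assume "F i d q j k c \<noteq> 0"
      then have "N i k j" using Fvan[OF U] by blast
      then show False using False Nsym2[OF U] by metis
    qed
    then show ?thesis using False by simp
  qed
  show "comult N qd F (HIdx a b i c d) e = (case e of (HIdx a' p j c' q, HIdx p' b' k q' d') \<Rightarrow>
       (if a' = a \<and> c' = c \<and> p' = p \<and> q' = q \<and> b' = b \<and> d' = d
           \<and> hbasis N (HIdx a p j c q) \<and> hbasis N (HIdx p b k q d) \<and> N i j k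
        then complex_of_real (sqrt (qd i * qd j * qd k) / sqrt (qd a * qd b * qd c * qd d))
               * G6j qd F i k j p a b * G6j qd F i j k q d c
        else 0))"
    unfolding e x y using main_sum[OF U h1 h2, of j k p q] key
    by (auto simp del: hbasis.simps)
qed

end
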